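(* Let $n\ge1$. There exists an involution $\phi$ of $B_n$ such that for every $\sigma\in B_n$, \[ \mathrm{maj}_B(\sigma)=\mathrm{rmaj}_{B_n}(\phi(\sigma))\quad\text{and}\quad \mathrm{Neg}(\sigma^{-1})=\mathrm{Neg}(\phi(\sigma)^{-1}). \]
   Context: $[a]=\{1,\dots,a\}$. $B_n$ is the group of bijections $\sigma$ of $\{\pm1,\dots,\pm n\}$ with $\sigma(-i)=-\sigma(i)$, written in window notation $[\sigma(1),\dots,\sigma(n)]$, with product $(\sigma\tau)(i)=\sigma(\tau(i))$. The Coxeter generators are $s_0=[-1,2,\dots,n]$ and $s_i=$ the transposition of $i$ and $i+1$ ($1\le i\le n-1$); $\ell_B$ is the length with respect to them. $\mathrm{Neg}(\sigma)=\{i\in[n]:\sigma(i)<0\}$. $\mathrm{Des}_S(\sigma)=\{1\le i\le n-1:\ell_B(\sigma s_i)<\ell_B(\sigma)\}$, $\mathrm{maj}_B(\sigma)=\sum_{i\in\mathrm{Des}_S(\sigma)}i$, and $\mathrm{rmaj}_{B_n}(\sigma)=\sum_{i\in\mathrm{Des}_S(\sigma)}(n-i)$. *)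

theory Defs
  imports Main
begin

definition signed_set :: "nat \<Rightarrow> int set" where
  "signed_set n = {i. 1 \<le> \<bar>i\<bar> \<and> \<bar>i\<bar> \<le> int n}"

definition Bn :: "nat \<Rightarrow> (int \<Rightarrow> int) set" where
  "Bn n = {\<sigma>. bij_betw \<sigma> (signed_set n) (signed_set n)
              \<and> (\<forall>i. \<sigma> (-i) = - \<sigma> i)
              \<and> (\<forall>i. i \<notin> signed_set n \<longrightarrow> \<sigma> i = i)}"

definition gen_s0 :: "int \<Rightarrow> int" where
  "gen_s0 = (\<lambda>x. if x = 1 then -1 else if x = -1 then 1 else x)"

definition gen_s :: "int \<Rightarrow> int \<Rightarrow> int" where
  "gen_s i = (\<lambda>x. if x = i then i + 1 else if x = i + 1 then i
                 else if x = -i then -(i + 1) else if x = -(i + 1) then -i else x)"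

definition gensB :: "nat \<Rightarrow> (int \<Rightarrow> int) set" where
  "gensB n = insert gen_s0 {gen_s (int i) | i. 1 \<le> i \<and> i \<le> n - 1}"

definition lenB :: "nat \<Rightarrow> (int \<Rightarrow> int) \<Rightarrow> nat" where
  "lenB n \<sigma> = (LEAST k. \<exists>ws. set ws \<subseteq> gensB n \<and> length ws = k \<and> foldr (\<circ>) ws id = \<sigma>)"

definition DesS :: "nat \<Rightarrow> (int \<Rightarrow> int) \<Rightarrow> nat set" where
  "DesS n \<sigma> = {i. 1 \<le> i \<and> i \<le> n - 1 \<and> lenB n (\<sigma> \<circ> gen_s (int i)) < lenB n \<sigma>}"

definition majB :: "nat \<Rightarrow> (int \<Rightarrow> int) \<Rightarrow> nat" where
  "majB n \<sigma> = (\<Sum>i\<in>DesS n \<sigma>. i)"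

definition rmajB :: "nat \<Rightarrow> (int \<Rightarrow> int) \<Rightarrow> nat" where
  "rmajB n \<sigma> = (\<Sum>i\<in>DesS n \<sigma>. n - i)"

definition Neg :: "nat \<Rightarrow> (int \<Rightarrow> int) \<Rightarrow> nat set" where
  "Neg n \<sigma> = {i. 1 \<le> i \<and> i \<le> n \<and> \<sigma> (int i) < 0}"

end

theory Submission
  imports Defs
begin


definition cnt :: "nat \<Rightarrow> (int\<Rightarrow>int) \<Rightarrow> int" where
 "cnt n \<tau> = (\<Sum>p\<in>signed_set n \<times> signed_set n. if fst p < snd p \<and> \<tau> (snd p) < \<tau> (fst p) then 1 else 0)"
definition negc :: "nat \<Rightarrow> (int\<Rightarrow>int) \<Rightarrow> int" where
 "negc n \<tau> = (\<Sum>a\<in>{1..int n}. if \<tau> a < 0 then 1 else 0)"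
definition L2 :: "nat \<Rightarrow> (int\<Rightarrow>int) \<Rightarrow> int" where
 "L2 n \<tau> = cnt n \<tau> + negc n \<tau>"

lemma finite_T: "finite (signed_set n)"
proof -
  have "signed_set n \<subseteq> {- int n..int n}" by (auto simp: signed_set_def)
  thus ?thesis by (rule finite_subset) simp
qed

lemma sum_diff_E:
  fixes f g :: "'a \<Rightarrow> int"
  assumes "finite A" "E \<subseteq> A" "\<forall>x\<in>A-E. f x = g x"
  shows "sum f A - sum g A = sum f E - sum g E"
proof -
  have "sum f A = sum f E + sum f (A - E)" "sum g A = sum g E + sum g (A - E)"
    using assms by (metis add.commute sum.subset_diff)+
  moreover have "sum f (A - E) = sum g (A - E)" using assms(3) by (intro sum.cong) auto
  ultimately show ?thesis by simp
qed

lemma cnt_reindex: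
  assumes "\<forall>x\<in>signed_set n. p x \<in> signed_set n" "\<forall>x\<in>signed_set n. p (p x) = x"
  shows "cnt n (\<tau> \<circ> p) = (\<Sum>q\<in>signed_set n \<times> signed_set n.
            if p (fst q) < p (snd q) \<and> \<tau> (snd q) < \<tau> (fst q) then 1 else 0)"
  unfolding cnt_def
  by (rule sum.reindex_bij_witness[of _ "\<lambda>(a,b). (p a, p b)" "\<lambda>(a,b). (p a, p b)"])
     (use assms in auto)

lemma gs_eq: "1 \<le> k \<Longrightarrow> gen_s k a = a + (if a = k \<or> a = -(k+1) then 1 else if a = k+1 \<or> a = -k then -1 else 0)"
  unfolding gen_s_def by auto

lemma cnt_s:
  assumes "1 \<le> k" "k + 1 \<le> int n"
  shows "cnt n (\<tau> \<circ> gen_s k) - cnt n \<tau> =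
     (if \<tau> k < \<tau> (k+1) then 1 else 0) - (if \<tau> (k+1) < \<tau> k then 1 else 0)
     + (if \<tau> (-(k+1)) < \<tau> (-k) then 1 else 0) - (if \<tau> (-k) < \<tau> (-(k+1)) then 1 else 0)"
proof -
  let ?T = "signed_set n \<times> signed_set n"
  let ?E = "{(k,k+1),(k+1,k),(-(k+1),-k),(-k,-(k+1))}"
  let ?h = "\<lambda>q. if gen_s k (fst q) < gen_s k (snd q) \<and> \<tau> (snd q) < \<tau> (fst q) then 1 else (0::int)"
  let ?g = "\<lambda>q. if fst q < snd q \<and> \<tau> (snd q) < \<tau> (fst q) then 1 else (0::int)"
  have p1: "\<forall>x\<in>signed_set n. gen_s k x \<in> signed_set n"
    using assms by (auto simp: gen_s_def signed_set_def)
  have p2: "\<forall>x\<in>signed_set n. gen_s k (gen_s k x) = x"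
    using assms by (auto simp: gen_s_def)
  have "cnt n (\<tau> \<circ> gen_s k) - cnt n \<tau> = sum ?h ?T - sum ?g ?T"
    using cnt_reindex[OF p1 p2] by (simp add: cnt_def)
  also have "\<dots> = sum ?h ?E - sum ?g ?E"
  proof (rule sum_diff_E)
    show "finite ?T" using finite_T by simp
    show "?E \<subseteq> ?T" using assms by (auto simp: signed_set_def)
    show "\<forall>x\<in>?T - ?E. ?h x = ?g x"
    proof
      fix x assume "x \<in> ?T - ?E"
      then obtain a b where x: "x = (a,b)" and ne: "(a,b) \<notin> ?E" by (cases x) auto
      have "\<not>(a = k \<and> b = k+1)" "\<not>(a = k+1 \<and> b = k)" "\<not>(a = -(k+1) \<and> b = -k)" "\<not>(a = -k \<and> b = -(k+1))"
        using ne by auto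
      hence "(gen_s k a < gen_s k b) = (a < b)"
        using assms unfolding gs_eq[OF assms(1)] by (smt (verit))
      thus "?h x = ?g x" using x by simp
    qed
  qed
  also have "\<dots> = (if \<tau> k < \<tau> (k+1) then 1 else 0) - (if \<tau> (k+1) < \<tau> k then 1 else 0)
     + (if \<tau> (-(k+1)) < \<tau> (-k) then 1 else 0) - (if \<tau> (-k) < \<tau> (-(k+1)) then 1 else 0)"
    using assms by (simp add: gen_s_def)
  finally show ?thesis .
qed

lemma negc_s:
  assumes "1 \<le> k" "k + 1 \<le> int n"
  shows "negc n (\<tau> \<circ> gen_s k) = negc n \<tau>"
  unfolding negc_def
  by (rule sum.reindex_bij_witness[of _ "gen_s k" "gen_s k"])
     (use assms in \<open>auto simp: gen_s_def\<close>)

lemma cnt_s0: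
  assumes "1 \<le> n"
  shows "cnt n (\<tau> \<circ> gen_s0) - cnt n \<tau> =
     (if \<tau> (-1) < \<tau> 1 then 1 else 0) - (if \<tau> 1 < \<tau> (-1) then 1 else 0)"
proof -
  let ?T = "signed_set n \<times> signed_set n"
  let ?E = "{(-1,1),(1,-1::int)}"
  let ?h = "\<lambda>q. if gen_s0 (fst q) < gen_s0 (snd q) \<and> \<tau> (snd q) < \<tau> (fst q) then 1 else (0::int)"
  let ?g = "\<lambda>q. if fst q < snd q \<and> \<tau> (snd q) < \<tau> (fst q) then 1 else (0::int)"
  have p1: "\<forall>x\<in>signed_set n. gen_s0 x \<in> signed_set n"
    using assms by (auto simp: gen_s0_def signed_set_def)
  have p2: "\<forall>x\<in>signed_set n. gen_s0 (gen_s0 x) = x"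
    using assms by (auto simp: gen_s0_def)
  have "cnt n (\<tau> \<circ> gen_s0) - cnt n \<tau> = sum ?h ?T - sum ?g ?T"
    using cnt_reindex[OF p1 p2] by (simp add: cnt_def)
  also have "\<dots> = sum ?h ?E - sum ?g ?E"
  proof (rule sum_diff_E)
    show "finite ?T" using finite_T by simp
    show "?E \<subseteq> ?T" using assms by (auto simp: signed_set_def)
    show "\<forall>x\<in>?T - ?E. ?h x = ?g x"
    proof
      fix x assume "x \<in> ?T - ?E"
      then obtain a b where x: "x = (a,b)" and ne: "(a,b) \<notin> ?E" and ab: "a \<noteq> 0" "b \<noteq> 0"
        by (cases x) (auto simp: signed_set_def)
      have "(gen_s0 a < gen_s0 b) = (a < b)"
        using ne ab unfolding gen_s0_def by auto
      thus "?h x = ?g x" using x by simp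
    qed
  qed
  also have "\<dots> = (if \<tau> (-1) < \<tau> 1 then 1 else 0) - (if \<tau> 1 < \<tau> (-1) then 1 else 0)"
    by (simp add: gen_s0_def)
  finally show ?thesis .
qed

lemma negc_s0:
  assumes "1 \<le> n"
  shows "negc n (\<tau> \<circ> gen_s0) - negc n \<tau> = (if \<tau> (-1) < 0 then 1 else 0) - (if \<tau> 1 < 0 then 1 else 0)"
proof -
  have "negc n (\<tau> \<circ> gen_s0) - negc n \<tau> =
     (\<Sum>a\<in>{1}. if (\<tau> \<circ> gen_s0) a < 0 then 1 else 0) - (\<Sum>a\<in>{1}. if \<tau> a < 0 then 1 else (0::int))"
    unfolding negc_def
    by (rule sum_diff_E) (use assms in \<open>auto simp: gen_s0_def\<close>)
  thus ?thesis by (simp add: gen_s0_def)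
qed



lemma Bn_odd: "\<sigma> \<in> Bn n \<Longrightarrow> \<sigma> (-i) = - \<sigma> i"
  by (simp add: Bn_def)
lemma Bn_out: "\<sigma> \<in> Bn n \<Longrightarrow> i \<notin> signed_set n \<Longrightarrow> \<sigma> i = i"
  by (simp add: Bn_def)
lemma Bn_bij: "\<sigma> \<in> Bn n \<Longrightarrow> bij_betw \<sigma> (signed_set n) (signed_set n)"
  by (simp add: Bn_def)
lemma Bn_inj: "\<sigma> \<in> Bn n \<Longrightarrow> x \<in> signed_set n \<Longrightarrow> y \<in> signed_set n \<Longrightarrow> \<sigma> x = \<sigma> y \<Longrightarrow> x = y"
  using Bn_bij bij_betw_imp_inj_on inj_onD by metis
lemma Bn_mem: "\<sigma> \<in> Bn n \<Longrightarrow> x \<in> signed_set n \<Longrightarrow> \<sigma> x \<in> signed_set n"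
  using Bn_bij bij_betwE by metis

lemma Bn_comp: "\<sigma> \<in> Bn n \<Longrightarrow> \<tau> \<in> Bn n \<Longrightarrow> \<sigma> \<circ> \<tau> \<in> Bn n"
  unfolding Bn_def using bij_betw_trans by fastforce

lemma gen_s0_Bn: "1 \<le> n \<Longrightarrow> gen_s0 \<in> Bn n"
  unfolding Bn_def
  by (intro CollectI conjI allI impI bij_betw_byWitness[where f'=gen_s0])
     (auto simp: gen_s0_def signed_set_def)

lemma gen_s_Bn: "1 \<le> k \<Longrightarrow> k + 1 \<le> int n \<Longrightarrow> gen_s k \<in> Bn n"
  unfolding Bn_def
  by (intro CollectI conjI allI impI bij_betw_byWitness[where f'="gen_s k"])
     (auto simp: gen_s_def signed_set_def)

lemma gensB_cases:
  assumes "g \<in> gensB n"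
  obtains "g = gen_s0" | k where "g = gen_s k" "1 \<le> k" "k + 1 \<le> int n"
  using assms unfolding gensB_def by force

lemma gensB_Bn: "1 \<le> n \<Longrightarrow> g \<in> gensB n \<Longrightarrow> g \<in> Bn n"
  by (erule gensB_cases) (auto intro: gen_s0_Bn gen_s_Bn)

lemma gens_invol: "g \<in> gensB n \<Longrightarrow> g \<circ> g = id"
  by (erule gensB_cases) (auto simp: gen_s0_def gen_s_def fun_eq_iff)

lemma L2_step_le:
  assumes "1 \<le> n" "g \<in> gensB n"
  shows "L2 n (\<tau> \<circ> g) \<le> L2 n \<tau> + 2"
  using assms(2)
proof (cases rule: gensB_cases)
  case 1
  thus ?thesis using cnt_s0[OF assms(1), of \<tau>] negc_s0[OF assms(1), of \<tau>]
    unfolding L2_def by (simp split: if_splits)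
next
  case (2 k)
  thus ?thesis using cnt_s[OF 2(2,3), of \<tau>] negc_s[OF 2(2,3), of \<tau>]
    unfolding L2_def by (simp split: if_splits)
qed

lemma L2_id: "L2 n id = 0"
  unfolding L2_def cnt_def negc_def by (auto intro!: sum.neutral)

lemma L2_nonneg: "0 \<le> L2 n \<tau>"
  unfolding L2_def cnt_def negc_def by (intro add_nonneg_nonneg sum_nonneg) auto

lemma foldr_comp_gen: "foldr (\<circ>) ws w = foldr (\<circ>) ws id \<circ> w"
  by (induction ws) auto

lemma foldr_snoc: "foldr (\<circ>) (ws @ [w]) id = foldr (\<circ>) ws id \<circ> w"
  using foldr_comp_gen[of ws w] by simp

lemma L2_lower:
  assumes "1 \<le> n" "set ws \<subseteq> gensB n"
  shows "L2 n (foldr (\<circ>) ws id) \<le> 2 * int (length ws)"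
  using assms(2)
proof (induction ws rule: rev_induct)
  case Nil
  thus ?case using L2_id[of n] by (simp add: id_def)
next
  case (snoc w ws)
  have "set ws \<subseteq> gensB n" using snoc.prems by simp
  hence "L2 n (foldr (\<circ>) ws id) \<le> 2 * int (length ws)" by (rule snoc.IH)
  moreover have "L2 n (foldr (\<circ>) ws id \<circ> w) \<le> L2 n (foldr (\<circ>) ws id) + 2"
    using L2_step_le[OF assms(1)] snoc.prems by simp
  ultimately have "L2 n (foldr (\<circ>) ws id \<circ> w) \<le> 2 * int (length ws) + 2" by linarith
  moreover have "int (length (ws @ [w])) = int (length ws) + 1" by simp
  ultimately show ?case unfolding foldr_snoc by linarith
qed

lemma Bn_s:
  assumes "\<sigma> \<in> Bn n" "1 \<le> k" "k + 1 \<le> int n"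
  shows "L2 n (\<sigma> \<circ> gen_s k) = L2 n \<sigma> + (if \<sigma> k < \<sigma> (k+1) then 2 else -2)"
proof -
  have "k \<in> signed_set n" "k + 1 \<in> signed_set n" using assms by (auto simp: signed_set_def)
  hence ne: "\<sigma> k \<noteq> \<sigma> (k+1)" using Bn_inj[OF assms(1)] by fastforce
  have o: "\<sigma> (-k) = - \<sigma> k" "\<sigma> (-(k+1)) = - \<sigma> (k+1)" by (rule Bn_odd[OF assms(1)])+
  show ?thesis using cnt_s[OF assms(2,3), of \<sigma>] negc_s[OF assms(2,3), of \<sigma>] ne o
    unfolding L2_def by (simp split: if_splits)
qed

lemma Bn_s0:
  assumes "\<sigma> \<in> Bn n" "1 \<le> n"
  shows "L2 n (\<sigma> \<circ> gen_s0) = L2 n \<sigma> + (if \<sigma> 1 < 0 then -2 else 2)"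
proof -
  have "1 \<in> signed_set n" using assms by (auto simp: signed_set_def)
  hence "\<sigma> 1 \<in> signed_set n" using Bn_mem[OF assms(1)] by blast
  hence ne: "\<sigma> 1 \<noteq> 0" by (auto simp: signed_set_def)
  have o: "\<sigma> (-1) = - \<sigma> 1" using Bn_odd[OF assms(1)] by auto
  show ?thesis using cnt_s0[OF assms(2), of \<sigma>] negc_s0[OF assms(2), of \<sigma>] ne o
    unfolding L2_def by (simp split: if_splits)
qed

lemma Bn_idchar:
  assumes "\<sigma> \<in> Bn n" "1 \<le> n" "0 < \<sigma> 1" "\<forall>k. 1 \<le> k \<and> k + 1 \<le> int n \<longrightarrow> \<sigma> k < \<sigma> (k+1)"
  shows "\<sigma> = id"
proof -
  have mem: "\<And>x. 1 \<le> x \<Longrightarrow> x \<le> int n \<Longrightarrow> \<sigma> x \<le> int n"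
  proof -
    fix x assume "1 \<le> x" "x \<le> int n"
    hence "\<sigma> x \<in> signed_set n" using Bn_mem[OF assms(1)] by (auto simp: signed_set_def)
    thus "\<sigma> x \<le> int n" by (auto simp: signed_set_def abs_le_iff)
  qed
  have up: "\<forall>j::nat. j < n \<longrightarrow> 1 + int j \<le> \<sigma> (1 + int j)"
  proof
    fix j show "j < n \<longrightarrow> 1 + int j \<le> \<sigma> (1 + int j)"
    proof (induction j)
      case 0 thus ?case using assms(3) by simp
    next
      case (Suc j)
      thus ?case using assms(4)[rule_format, of "1 + int j"] by auto
    qed
  qed
  have down: "\<forall>j::nat. j < n \<longrightarrow> \<sigma> (int n - int j) \<le> int n - int j"
  proof
    fix j show "j < n \<longrightarrow> \<sigma> (int n - int j) \<le> int n - int j"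
    proof (induction j)
      case 0 thus ?case using mem[of "int n"] assms(2) by simp
    next
      case (Suc j)
      thus ?case using assms(4)[rule_format, of "int n - int (Suc j)"] by auto
    qed
  qed
  have pos: "\<sigma> x = x" if "1 \<le> x" "x \<le> int n" for x
  proof -
    have "1 + int (nat (x - 1)) \<le> \<sigma> x" using up[rule_format, of "nat (x - 1)"] that by simp
    moreover have "\<sigma> x \<le> x" using down[rule_format, of "nat (int n - x)"] that by simp
    ultimately show ?thesis using that by simp
  qed
  show ?thesis
  proof
    fix x
    show "\<sigma> x = id x"
    proof (cases "x \<in> signed_set n")
      case True
      show ?thesis
      proof (cases "0 < x")
        case True thus ?thesis using pos \<open>x \<in> signed_set n\<close> by (auto simp: signed_set_def)
      next
        case False
        hence "\<sigma> (-x) = -x" using pos \<open>x \<in> signed_set n\<close> by (auto simp: signed_set_def)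
        thus ?thesis using Bn_odd[OF assms(1), of "-x"] by simp
      qed
    qed (use Bn_out[OF assms(1)] in auto)
  qed
qed

lemma word_exists:
  assumes "1 \<le> n"
  shows "\<sigma> \<in> Bn n \<Longrightarrow> \<exists>ws. set ws \<subseteq> gensB n \<and> 2 * int (length ws) = L2 n \<sigma> \<and> foldr (\<circ>) ws id = \<sigma>"
proof (induction "nat (L2 n \<sigma>)" arbitrary: \<sigma> rule: less_induct)
  case less
  show ?case
  proof (cases "\<sigma> = id")
    case True thus ?thesis using L2_id by (intro exI[of _ "[]"]) auto
  next
    case False
    have "\<exists>g. g \<in> gensB n \<and> L2 n (\<sigma> \<circ> g) = L2 n \<sigma> - 2"
    proof (cases "\<sigma> 1 < 0")
      case True
      thus ?thesis using Bn_s0[OF less.prems assms] by (intro exI[of _ gen_s0]) (auto simp: gensB_def)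
    next
      case False
      have "\<sigma> 1 \<noteq> 0" using Bn_mem[OF less.prems, of 1] assms by (auto simp: signed_set_def)
      with False have "0 < \<sigma> 1" by simp
      then obtain k where k: "1 \<le> k" "k + 1 \<le> int n" "\<not> \<sigma> k < \<sigma> (k+1)"
        using Bn_idchar[OF less.prems assms] \<open>\<sigma> \<noteq> id\<close> by blast
      have "gen_s k \<in> gensB n" unfolding gensB_def
        using k by (auto intro!: exI[of _ "nat k"])
      thus ?thesis using Bn_s[OF less.prems k(1,2)] k(3) by (intro exI[of _ "gen_s k"]) auto
    qed
    then obtain g where g: "g \<in> gensB n" "L2 n (\<sigma> \<circ> g) = L2 n \<sigma> - 2" by blast
    have "\<sigma> \<circ> g \<in> Bn n" using Bn_comp[OF less.prems gensB_Bn[OF assms g(1)]] .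
    moreover have "nat (L2 n (\<sigma> \<circ> g)) < nat (L2 n \<sigma>)" using g(2) L2_nonneg[of n "\<sigma> \<circ> g"] by simp
    ultimately obtain ws where ws: "set ws \<subseteq> gensB n" "2 * int (length ws) = L2 n (\<sigma> \<circ> g)"
        "foldr (\<circ>) ws id = \<sigma> \<circ> g" using less.hyps by blast
    have "foldr (\<circ>) (ws @ [g]) id = \<sigma>"
      by (simp only: foldr_snoc ws(3) comp_assoc gens_invol[OF g(1)] comp_id)
    thus ?thesis using ws g by (intro exI[of _ "ws @ [g]"]) auto
  qed
qed

lemma lenB_eq:
  assumes "1 \<le> n" "\<sigma> \<in> Bn n"
  shows "2 * int (lenB n \<sigma>) = L2 n \<sigma>"
proof -
  obtain ws where ws: "set ws \<subseteq> gensB n" "2 * int (length ws) = L2 n \<sigma>" "foldr (\<circ>) ws id = \<sigma>"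
    using word_exists[OF assms] by blast
  have "lenB n \<sigma> = length ws" unfolding lenB_def
  proof (rule Least_equality)
    show "\<exists>vs. set vs \<subseteq> gensB n \<and> length vs = length ws \<and> foldr (\<circ>) vs id = \<sigma>" using ws by blast
  next
    fix k assume "\<exists>vs. set vs \<subseteq> gensB n \<and> length vs = k \<and> foldr (\<circ>) vs id = \<sigma>"
    then obtain vs where "set vs \<subseteq> gensB n" "length vs = k" "foldr (\<circ>) vs id = \<sigma>" by blast
    thus "length ws \<le> k" using L2_lower[OF assms(1), of vs] ws(2) by simp
  qed
  thus ?thesis using ws by simp
qed

lemma DesS_char:
  assumes "1 \<le> n" "\<sigma> \<in> Bn n"
  shows "DesS n \<sigma> = {i. 1 \<le> i \<and> i \<le> n - 1 \<and> \<sigma> (int i + 1) < \<sigma> (int i)}"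
proof -
  have "lenB n (\<sigma> \<circ> gen_s (int i)) < lenB n \<sigma> \<longleftrightarrow> \<sigma> (int i + 1) < \<sigma> (int i)"
    if i: "1 \<le> i" "i \<le> n - 1" for i
  proof -
    have k: "1 \<le> int i" "int i + 1 \<le> int n" using i assms(1) by auto
    have "\<sigma> \<circ> gen_s (int i) \<in> Bn n" using Bn_comp[OF assms(2) gen_s_Bn[OF k]] .
    hence "2 * int (lenB n (\<sigma> \<circ> gen_s (int i))) = 2 * int (lenB n \<sigma>) + (if \<sigma> (int i) < \<sigma> (int i+1) then 2 else -2)"
      using lenB_eq[OF assms(1)] Bn_s[OF assms(2) k] assms(2) by simp
    moreover have "\<sigma> (int i) \<noteq> \<sigma> (int i + 1)"
      using Bn_inj[OF assms(2), of "int i" "int i + 1"] k by (auto simp: signed_set_def)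
    ultimately show ?thesis by (auto split: if_splits)
  qed
  thus ?thesis unfolding DesS_def by auto
qed



definition idx :: "int list \<Rightarrow> int \<Rightarrow> nat" where
  "idx xs v = (THE i. i < length xs \<and> xs ! i = v)"

definition rv :: "int set \<Rightarrow> int \<Rightarrow> int" where
  "rv V v = (let xs = sorted_list_of_set V in xs ! (length xs - 1 - idx xs v))"

lemma idx_prop: "distinct xs \<Longrightarrow> v \<in> set xs \<Longrightarrow> idx xs v < length xs \<and> xs ! idx xs v = v"
  unfolding idx_def by (rule theI') (rule distinct_Ex1)

lemma idx_nth: "distinct xs \<Longrightarrow> i < length xs \<Longrightarrow> idx xs (xs ! i) = i"
  unfolding idx_def by (rule the_equality) (auto simp: nth_eq_iff_index_eq)

context
  fixes V :: "int set"
  assumes fin: "finite V"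
begin

private abbreviation "xs \<equiv> sorted_list_of_set V"

private lemma xs_facts: "set xs = V" "distinct xs" "sorted_wrt (<) xs"
  using fin by (auto simp: strict_sorted_list_of_set)

lemma rv_mem: "v \<in> V \<Longrightarrow> rv V v \<in> V"
proof -
  assume v: "v \<in> V"
  have "idx xs v < length xs" using idx_prop[of xs v] xs_facts v by auto
  hence "length xs - 1 - idx xs v < length xs" by simp
  thus ?thesis unfolding rv_def Let_def using xs_facts(1) nth_mem by blast
qed

lemma rv_invol: "v \<in> V \<Longrightarrow> rv V (rv V v) = v"
proof -
  assume v: "v \<in> V"
  let ?i = "idx xs v"
  have i: "?i < length xs" "xs ! ?i = v" using idx_prop[of xs v] xs_facts v by auto
  have "idx xs (xs ! (length xs - 1 - ?i)) = length xs - 1 - ?i"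
    using idx_nth[OF xs_facts(2)] i by simp
  hence "rv V (rv V v) = xs ! (length xs - 1 - (length xs - 1 - ?i))"
    unfolding rv_def Let_def by simp
  also have "\<dots> = xs ! ?i" using i by (simp add: diff_diff_cancel)
  finally show ?thesis using i by simp
qed

lemma rv_anti: "v \<in> V \<Longrightarrow> w \<in> V \<Longrightarrow> v < w \<Longrightarrow> rv V w < rv V v"
proof -
  assume v: "v \<in> V" and w: "w \<in> V" and vw: "v < w"
  let ?i = "idx xs v" and ?j = "idx xs w"
  have i: "?i < length xs" "xs ! ?i = v" using idx_prop[of xs v] xs_facts v by auto
  have j: "?j < length xs" "xs ! ?j = w" using idx_prop[of xs w] xs_facts w by auto
  have srt: "\<And>a b. a < b \<Longrightarrow> b < length xs \<Longrightarrow> xs ! a < xs ! b"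
    using xs_facts(3) sorted_wrt_iff_nth_less by blast
  have "?i < ?j"
  proof (rule ccontr)
    assume "\<not> ?i < ?j"
    hence "?j < ?i \<or> ?j = ?i" by auto
    thus False using srt[of ?j ?i] i j vw by auto
  qed
  hence "xs ! (length xs - 1 - ?j) < xs ! (length xs - 1 - ?i)"
    using srt i j by simp
  thus ?thesis unfolding rv_def Let_def .
qed

lemma rv_iff: "v \<in> V \<Longrightarrow> w \<in> V \<Longrightarrow> rv V v < rv V w \<longleftrightarrow> w < v"
  using rv_anti[of v w] rv_anti[of w v] by (cases "v < w"; cases "v = w") auto

end

definition VV :: "nat \<Rightarrow> (int \<Rightarrow> int) \<Rightarrow> int set" where
  "VV n \<sigma> = \<sigma> ` {1..int n}"

definition phi :: "nat \<Rightarrow> (int \<Rightarrow> int) \<Rightarrow> int \<Rightarrow> int" where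
  "phi n \<sigma> = (\<lambda>x. if 1 \<le> x \<and> x \<le> int n then rv (VV n \<sigma>) (\<sigma> (int n + 1 - x))
        else if 1 \<le> -x \<and> -x \<le> int n then - rv (VV n \<sigma>) (\<sigma> (int n + 1 + x)) else x)"

lemma VV_fin: "finite (VV n \<sigma>)" by (simp add: VV_def)

lemma VV_sub: "\<sigma> \<in> Bn n \<Longrightarrow> VV n \<sigma> \<subseteq> signed_set n"
  unfolding VV_def using Bn_mem by (fastforce simp: signed_set_def)

lemma VV_nopair:
  assumes "\<sigma> \<in> Bn n" "v \<in> VV n \<sigma>" "- v \<in> VV n \<sigma>" shows False
proof -
  obtain a b where a: "1 \<le> a" "a \<le> int n" "\<sigma> a = v" and b: "1 \<le> b" "b \<le> int n" "\<sigma> b = -v"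
    using assms(2,3) unfolding VV_def by auto
  have "\<sigma> (-a) = \<sigma> b" using Bn_odd[OF assms(1), of a] a b by simp
  hence "-a = b" using Bn_inj[OF assms(1)] a b by (auto simp: signed_set_def)
  thus False using a b by simp
qed

lemma ss_neg: "x \<in> signed_set n \<Longrightarrow> -x \<in> signed_set n" by (simp add: signed_set_def)

lemma rev_range: "1 \<le> x \<Longrightarrow> x \<le> int n \<Longrightarrow> \<sigma> (int n + 1 - x) \<in> VV n \<sigma>"
  unfolding VV_def by auto

lemma phi_pos: "1 \<le> x \<Longrightarrow> x \<le> int n \<Longrightarrow> phi n \<sigma> x = rv (VV n \<sigma>) (\<sigma> (int n + 1 - x))"
  unfolding phi_def by simp

lemma VV_phi:
  assumes "\<sigma> \<in> Bn n"
  shows "VV n (phi n \<sigma>) = VV n \<sigma>"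
proof
  show "VV n (phi n \<sigma>) \<subseteq> VV n \<sigma>"
  proof
    fix v assume "v \<in> VV n (phi n \<sigma>)"
    then obtain x where x: "1 \<le> x" "x \<le> int n" "v = phi n \<sigma> x" unfolding VV_def by auto
    have "v = rv (VV n \<sigma>) (\<sigma> (int n + 1 - x))" using x phi_pos by simp
    thus "v \<in> VV n \<sigma>" using rv_mem[OF VV_fin rev_range[OF x(1,2)]] by simp
  qed
next
  show "VV n \<sigma> \<subseteq> VV n (phi n \<sigma>)"
  proof
    fix v assume v: "v \<in> VV n \<sigma>"
    hence "rv (VV n \<sigma>) v \<in> VV n \<sigma>" by (rule rv_mem[OF VV_fin])
    then obtain a where a: "1 \<le> a" "a \<le> int n" "\<sigma> a = rv (VV n \<sigma>) v" unfolding VV_def by auto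
    have "phi n \<sigma> (int n + 1 - a) = rv (VV n \<sigma>) (rv (VV n \<sigma>) v)"
      using a phi_pos[of "int n + 1 - a" n \<sigma>] by simp
    also have "\<dots> = v" using rv_invol[OF VV_fin v] .
    finally have e: "phi n \<sigma> (int n + 1 - a) = v" .
    have "int n + 1 - a \<in> {1..int n}" using a by simp
    thus "v \<in> VV n (phi n \<sigma>)" unfolding VV_def using e by (intro image_eqI[of _ _ "int n + 1 - a"]) auto
  qed
qed

lemma phi_Bn:
  assumes "\<sigma> \<in> Bn n"
  shows "phi n \<sigma> \<in> Bn n"
proof -
  let ?V = "VV n \<sigma>" and ?p = "phi n \<sigma>" and ?T = "signed_set n"
  have rvT: "rv ?V (\<sigma> (int n + 1 - x)) \<in> ?T" if "1 \<le> x" "x \<le> int n" for x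
    using rv_mem[OF VV_fin rev_range[OF that]] VV_sub[OF assms] by blast
  have odd: "\<forall>i. ?p (-i) = - ?p i" by (auto simp: phi_def)
  have out: "\<forall>i. i \<notin> ?T \<longrightarrow> ?p i = i" by (auto simp: phi_def signed_set_def)
  have img: "?p ` ?T \<subseteq> ?T"
  proof
    fix y assume "y \<in> ?p ` ?T"
    then obtain x where x: "x \<in> ?T" "y = ?p x" by blast
    show "y \<in> ?T"
    proof (cases "0 < x")
      case True thus ?thesis using x rvT[of x] by (auto simp: phi_def signed_set_def)
    next
      case False
      hence "1 \<le> -x" "-x \<le> int n" using x by (auto simp: signed_set_def)
      thus ?thesis using x rvT[of "-x"] ss_neg by (auto simp: phi_def)
    qed
  qed
  have key: "\<And>x. x \<in> ?T \<Longrightarrow> \<exists>a s. 1 \<le> a \<and> a \<le> int n \<and> (s = 1 \<or> s = -1) \<and> x = s * (int n + 1 - a)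
              \<and> ?p x = s * rv ?V (\<sigma> a)"
  proof -
    fix x assume x: "x \<in> ?T"
    show "?thesis x"
    proof (cases "0 < x")
      case True
      thus ?thesis using x by (intro exI[of _ "int n + 1 - x"] exI[of _ 1]) (auto simp: phi_def signed_set_def)
    next
      case False
      thus ?thesis using x by (intro exI[of _ "int n + 1 + x"] exI[of _ "-1"]) (auto simp: phi_def signed_set_def)
    qed
  qed
  have inj: "inj_on ?p ?T"
  proof
    fix x y assume x: "x \<in> ?T" and y: "y \<in> ?T" and e: "?p x = ?p y"
    obtain a s where a: "1 \<le> a" "a \<le> int n" "s = 1 \<or> s = -1" "x = s * (int n + 1 - a)" "?p x = s * rv ?V (\<sigma> a)"
      using key[OF x] by blast
    obtain b t where b: "1 \<le> b" "b \<le> int n" "t = 1 \<or> t = -1" "y = t * (int n + 1 - b)" "?p y = t * rv ?V (\<sigma> b)"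
      using key[OF y] by blast
    have av: "\<sigma> a \<in> ?V" "\<sigma> b \<in> ?V" using a b unfolding VV_def by auto
    have ra: "rv ?V (\<sigma> a) \<in> ?V" "rv ?V (\<sigma> b) \<in> ?V" using av rv_mem[OF VV_fin] by auto
    show "x = y"
    proof (cases "s = t")
      case True
      hence "rv ?V (\<sigma> a) = rv ?V (\<sigma> b)" using e a b by auto
      hence "\<sigma> a = \<sigma> b" using rv_invol[OF VV_fin] av by metis
      hence "a = b" using Bn_inj[OF assms] a b by (auto simp: signed_set_def)
      thus ?thesis using True a b by simp
    next
      case False
      hence "rv ?V (\<sigma> a) = - rv ?V (\<sigma> b)" using e a b by auto
      thus ?thesis using VV_nopair[OF assms] ra by metis
    qed
  qed
  have "?p ` ?T = ?T" using endo_inj_surj[OF finite_T img inj] .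
  hence "bij_betw ?p ?T ?T" using inj by (simp add: bij_betw_def)
  thus ?thesis unfolding Bn_def using odd out by blast
qed

lemma phi_invol:
  assumes "\<sigma> \<in> Bn n"
  shows "phi n (phi n \<sigma>) = \<sigma>"
proof
  fix x
  let ?V = "VV n \<sigma>"
  have V: "VV n (phi n \<sigma>) = ?V" by (rule VV_phi[OF assms])
  show "phi n (phi n \<sigma>) x = \<sigma> x"
  proof (cases "1 \<le> x \<and> x \<le> int n")
    case True
    have "phi n (phi n \<sigma>) x = rv ?V (rv ?V (\<sigma> x))"
      using True V by (simp add: phi_def)
    also have "\<dots> = \<sigma> x" using rv_invol[OF VV_fin] True unfolding VV_def by auto
    finally show ?thesis .
  next
    case False
    show ?thesis
    proof (cases "1 \<le> -x \<and> -x \<le> int n")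
      case True
      have "phi n (phi n \<sigma>) x = - rv ?V (rv ?V (\<sigma> (-x)))"
        using True V by (simp add: phi_def)
      also have "\<dots> = - \<sigma> (-x)" using rv_invol[OF VV_fin] True unfolding VV_def by auto
      finally show ?thesis using Bn_odd[OF assms, of x] by simp
    next
      case False2: False
      hence "x \<notin> signed_set n" using False by (auto simp: signed_set_def)
      moreover have "\<And>\<tau>. phi n \<tau> x = x" using False False2 unfolding phi_def by auto
      ultimately show ?thesis using Bn_out[OF assms] by simp
    qed
  qed
qed

lemma Bn_bij_univ:
  assumes "\<sigma> \<in> Bn n"
  shows "bij \<sigma>"
proof -
  have "inj \<sigma>"
  proof
    fix x y assume e: "\<sigma> x = \<sigma> y"
    show "x = y"
    proof (cases "x \<in> signed_set n"; cases "y \<in> signed_set n")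
      assume "x \<in> signed_set n" "y \<in> signed_set n" thus ?thesis using Bn_inj[OF assms] e by blast
    next
      assume "x \<in> signed_set n" "y \<notin> signed_set n" thus ?thesis using Bn_mem[OF assms] Bn_out[OF assms] e by metis
    next
      assume "x \<notin> signed_set n" "y \<in> signed_set n" thus ?thesis using Bn_mem[OF assms] Bn_out[OF assms] e by metis
    next
      assume "x \<notin> signed_set n" "y \<notin> signed_set n" thus ?thesis using Bn_out[OF assms] e by metis
    qed
  qed
  moreover have "surj \<sigma>"
  proof -
    have "y \<in> range \<sigma>" for y
    proof (cases "y \<in> signed_set n")
      case True
      thus ?thesis using bij_betw_imp_surj_on[OF Bn_bij[OF assms]] by blast
    next
      case False thus ?thesis using Bn_out[OF assms] by (metis rangeI)
    qed
    thus ?thesis by blast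
  qed
  ultimately show ?thesis by (simp add: bij_def)
qed

lemma Neg_inv:
  assumes "\<sigma> \<in> Bn n"
  shows "Neg n (inv \<sigma>) = {k. 1 \<le> k \<and> k \<le> n \<and> - int k \<in> VV n \<sigma>}"
proof -
  have b: "bij \<sigma>" by (rule Bn_bij_univ[OF assms])
  have "inv \<sigma> (int k) < 0 \<longleftrightarrow> - int k \<in> VV n \<sigma>" if k: "1 \<le> k" "k \<le> n" for k
  proof
    assume "inv \<sigma> (int k) < 0"
    moreover have "\<sigma> (inv \<sigma> (int k)) = int k" using b by (simp add: bij_is_surj surj_f_inv_f)
    ultimately have x: "inv \<sigma> (int k) \<in> signed_set n"
      using Bn_out[OF assms, of "inv \<sigma> (int k)"] by force
    let ?x = "inv \<sigma> (int k)"
    have "\<sigma> (- ?x) = - int k" using Bn_odd[OF assms] \<open>\<sigma> ?x = int k\<close> by simp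
    moreover have "1 \<le> - ?x" "- ?x \<le> int n" using x \<open>?x < 0\<close> by (auto simp: signed_set_def)
    ultimately show "- int k \<in> VV n \<sigma>" unfolding VV_def by (intro image_eqI[of _ _ "- ?x"]) auto
  next
    assume "- int k \<in> VV n \<sigma>"
    then obtain a where a: "1 \<le> a" "a \<le> int n" "\<sigma> a = - int k" unfolding VV_def by auto
    have "\<sigma> (-a) = int k" using Bn_odd[OF assms, of a] a by simp
    hence "inv \<sigma> (int k) = -a" using b by (metis bij_is_inj inv_f_f)
    thus "inv \<sigma> (int k) < 0" using a by simp
  qed
  thus ?thesis unfolding Neg_def by auto
qed

lemma DesS_phi:
  assumes "1 \<le> n" "\<sigma> \<in> Bn n"
  shows "DesS n (phi n \<sigma>) = (\<lambda>j. n - j) ` DesS n \<sigma>"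
proof -
  let ?V = "VV n \<sigma>"
  have c: "phi n \<sigma> (int i + 1) < phi n \<sigma> (int i) \<longleftrightarrow> \<sigma> (int (n - i) + 1) < \<sigma> (int (n - i))"
    if i: "1 \<le> i" "i \<le> n - 1" for i
  proof -
    have ii: "int i + 1 \<le> int n" using i assms(1) by linarith
    have e1: "phi n \<sigma> (int i + 1) = rv ?V (\<sigma> (int (n - i)))"
      using i ii by (simp add: phi_def of_nat_diff)
    have h: "int n + 1 - int i = int (n - i) + 1" using i ii by simp
    have "phi n \<sigma> (int i) = rv ?V (\<sigma> (int n + 1 - int i))" using i ii by (simp add: phi_def)
    hence e2: "phi n \<sigma> (int i) = rv ?V (\<sigma> (int (n - i) + 1))" by (simp only: h)
    have m: "\<sigma> (int (n - i)) \<in> ?V" "\<sigma> (int (n - i) + 1) \<in> ?V" using i unfolding VV_def by auto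
    show ?thesis unfolding e1 e2 using rv_iff[OF VV_fin m] .
  qed
  have D1: "DesS n (phi n \<sigma>) = {i. 1 \<le> i \<and> i \<le> n - 1 \<and> \<sigma> (int (n - i) + 1) < \<sigma> (int (n - i))}"
    using DesS_char[OF assms(1) phi_Bn[OF assms(2)]] c by auto
  have D2: "DesS n \<sigma> = {i. 1 \<le> i \<and> i \<le> n - 1 \<and> \<sigma> (int i + 1) < \<sigma> (int i)}"
    using DesS_char[OF assms] .
  show ?thesis unfolding D1 D2
  proof (intro equalityI subsetI)
    fix i assume "i \<in> {i. 1 \<le> i \<and> i \<le> n - 1 \<and> \<sigma> (int (n - i) + 1) < \<sigma> (int (n - i))}"
    hence i: "1 \<le> i" "i \<le> n - 1" "\<sigma> (int (n - i) + 1) < \<sigma> (int (n - i))" by auto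
    hence "n - i \<in> {i. 1 \<le> i \<and> i \<le> n - 1 \<and> \<sigma> (int i + 1) < \<sigma> (int i)}" by auto
    moreover have "i = n - (n - i)" using i by auto
    ultimately show "i \<in> (\<lambda>j. n - j) ` {i. 1 \<le> i \<and> i \<le> n - 1 \<and> \<sigma> (int i + 1) < \<sigma> (int i)}" by blast
  next
    fix i assume "i \<in> (\<lambda>j. n - j) ` {i. 1 \<le> i \<and> i \<le> n - 1 \<and> \<sigma> (int i + 1) < \<sigma> (int i)}"
    then obtain j where j: "i = n - j" "1 \<le> j" "j \<le> n - 1" "\<sigma> (int j + 1) < \<sigma> (int j)" by auto
    have "n - (n - j) = j" using j by auto
    thus "i \<in> {i. 1 \<le> i \<and> i \<le> n - 1 \<and> \<sigma> (int (n - i) + 1) < \<sigma> (int (n - i))}" using j by auto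
  qed
qed

lemma rmaj_phi:
  assumes "1 \<le> n" "\<sigma> \<in> Bn n"
  shows "majB n \<sigma> = rmajB n (phi n \<sigma>)"
proof -
  have sub: "\<And>j. j \<in> DesS n \<sigma> \<Longrightarrow> j \<le> n - 1" unfolding DesS_def by auto
  have inj: "inj_on (\<lambda>j. n - j) (DesS n \<sigma>)"
    by (rule inj_onI) (use sub assms(1) in fastforce)
  have "rmajB n (phi n \<sigma>) = (\<Sum>i\<in>(\<lambda>j. n - j) ` DesS n \<sigma>. n - i)"
    unfolding rmajB_def DesS_phi[OF assms] ..
  also have "\<dots> = (\<Sum>j\<in>DesS n \<sigma>. n - (n - j))" by (simp add: sum.reindex[OF inj])
  also have "\<dots> = (\<Sum>j\<in>DesS n \<sigma>. j)"
  proof (intro sum.cong refl)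
    fix j assume "j \<in> DesS n \<sigma>"
    thus "n - (n - j) = j" using sub[of j] by simp
  qed
  finally show ?thesis unfolding majB_def by simp
qed

theorem lemma2p29:
  fixes n :: nat
  assumes "n \<ge> 1"
  shows "\<exists>\<phi>. (\<forall>\<sigma>\<in>Bn n. \<phi> \<sigma> \<in> Bn n \<and> \<phi> (\<phi> \<sigma>) = \<sigma>)
            \<and> (\<forall>\<sigma>\<in>Bn n. majB n \<sigma> = rmajB n (\<phi> \<sigma>)
                          \<and> Neg n (inv \<sigma>) = Neg n (inv (\<phi> \<sigma>)))"
proof (intro exI[of _ "phi n"] conjI ballI)
  fix \<sigma> assume s: "\<sigma> \<in> Bn n"
  show "phi n \<sigma> \<in> Bn n" by (rule phi_Bn[OF s])
  show "phi n (phi n \<sigma>) = \<sigma>" by (rule phi_invol[OF s])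
  show "majB n \<sigma> = rmajB n (phi n \<sigma>)" by (rule rmaj_phi[OF assms s])
  show "Neg n (inv \<sigma>) = Neg n (inv (phi n \<sigma>))"
    unfolding Neg_inv[OF s] Neg_inv[OF phi_Bn[OF s]] VV_phi[OF s] ..
qed

end
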